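(* Let $G=(V,E)$ be a simple directed graph with at least one double edge, and let $T^u=p_{\mathrm{SEF}}T^u_{\mathrm{SEF}}+p_{\mathrm{DEM}}T^u_{\mathrm{DEM}}+p_{\mathrm{CP}}T^u_{\mathrm{CP}}+p_{\mathrm{CS}}T^u_{\mathrm{CS}}$ with $(p_{\mathrm{SEF}},p_{\mathrm{DEM}},p_{\mathrm{CP}},p_{\mathrm{CS}})$ a probability vector with positive entries. Then the Markov chain on the state space $\mathcal{G}_0^\infty(G)$ with transition matrix $T^u$ started at $G$ is ergodic (irreducible and aperiodic) and has the uniform distribution on $\mathcal{G}_0^\infty(G)$ as its equilibrium distribution.
   Context: A simple directed graph is $G=(V,E)$ with $V$ finite and $E\subseteq (V\times V)\setminus\{(v,v)\}$. $(i,j)\in E$ is a single edge if $(j,i)\notin E$; an ordered pair $(k,l)$ is a double edge if $(k,l),(l,k)\in E$. $\mathrm{pr}(V,E)=(V,\{\{u,v\}:(u,v)\in E\})$. $\mathcal{G}_0^\infty(G)$ is the set of simple directed graphs on $V$ with the same underlying undirected graph and the same number of directed edges as $G$. A clique is a vertex set in which every two distinct vertices are joined by an edge in some direction; maximal cliques depend only on $\mathrm{pr}(G)$. For a permutation $\pi$, $\pi((i,j))=(\pi(i),\pi(j))$. Moves: $\mathrm{SEF}_{i,j}(V,E)=(V,(E\setminus\{(i,j)\})\cup\{(j,i)\})$ for a single edge $(i,j)$; $\mathrm{DEM}^{k,l}_{i,j}(V,E)=(V,(E\setminus\{(k,l)\})\cup\{(j,i)\})$ for a single edge $(i,j)$ and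 double edge $(k,l)$; for a maximal clique $V_m$ with induced edges $E_m$ and a permutation $\pi$ of $V_m$, $\mathrm{CP}^\pi_m(V,E)=(V,(E\setminus E_m)\cup\pi(E_m))$; for equal-sized maximal cliques $V_1,V_2$ with induced edge sets $E_1,E_2$ and a permutation $\pi$ of $V_1\cup V_2$ with $\pi(V_1)=V_2,\pi(V_2)=V_1$, $\mathrm{CS}^\pi_{V_1,V_2}(V,E)=(V,(E\setminus(E_1\cup E_2))\cup\pi(E_1\cup E_2))$. Transition matrices: $T^u_{\mathrm{SEF}}(H,H')$ = probability that a uniformly drawn single edge $(i,j)$ of $H$ gives $\mathrm{SEF}_{i,j}(H)=H'$; $T^u_{\mathrm{DEM}}(H,H')$ = probability that a uniformly drawn single edge and an independently uniformly drawn double edge of $H$ give $\mathrm{DEM}^{k,l}_{i,j}(H)=H'$ (if a move has no eligible edges in $H$, it leaves $H$ unchanged). Fix a probability distribution $(p_d)$ on the sizes of maximal cliques of $\mathrm{pr}(G)$. $T^u_{\mathrm{CP}}(H,H')$ = probability that drawing $d\sim p_d$, then a maximal clique of size $d$ uniformly, then a permutation of it uniformly, yields $H'$ via CP; $T^u_{\mathrm{CS}}(H,H')$ = probability that drawing $d\sim p_d$, then two maximal cliques $V_1,V_2$ of size $d$ uniformly and independently, then $\pi$ uniformly among permutations of $V_1\cup V_2$ with $\pi(V_1)=V_2,\pi(V_2)=V_1$, yields $H'$ via CS. *)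

theory Defs
  imports Complex_Main "HOL-Combinatorics.Permutations"
begin

text \<open>Since the vertex set is fixed throughout, states of
  the Markov chain are represented by their edge sets.\<close>

definition simple_digraph :: "'a set \<Rightarrow> ('a \<times> 'a) set \<Rightarrow> bool" where
  "simple_digraph V E \<longleftrightarrow> finite V \<and> E \<subseteq> (V \<times> V) - {(v, v) | v. True}"

definition single_edges :: "('a \<times> 'a) set \<Rightarrow> ('a \<times> 'a) set" where
  "single_edges E = {(i, j). (i, j) \<in> E \<and> (j, i) \<notin> E}"

definition double_edges :: "('a \<times> 'a) set \<Rightarrow> ('a \<times> 'a) set" where
  "double_edges E = {(k, l). (k, l) \<in> E \<and> (l, k) \<in> E}"

definition pr_edges :: "('a \<times> 'a) set \<Rightarrow> 'a set set" where
  "pr_edges E = {{u, v} | u v. (u, v) \<in> E}"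

definition G0inf :: "'a set \<Rightarrow> ('a \<times> 'a) set \<Rightarrow> ('a \<times> 'a) set set" where
  "G0inf V E = {E'. simple_digraph V E' \<and> pr_edges E' = pr_edges E \<and> card E' = card E}"

definition is_clique :: "'a set \<Rightarrow> ('a \<times> 'a) set \<Rightarrow> 'a set \<Rightarrow> bool" where
  "is_clique V E C \<longleftrightarrow> C \<subseteq> V \<and> (\<forall>u\<in>C. \<forall>v\<in>C. u \<noteq> v \<longrightarrow> {u, v} \<in> pr_edges E)"

definition is_max_clique :: "'a set \<Rightarrow> ('a \<times> 'a) set \<Rightarrow> 'a set \<Rightarrow> bool" where
  "is_max_clique V E C \<longleftrightarrow> is_clique V E C \<and> \<not> (\<exists>C'. is_clique V E C' \<and> C \<subset> C')"

definition max_cliques :: "'a set \<Rightarrow> ('a \<times> 'a) set \<Rightarrow> 'a set set" where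
  "max_cliques V E = {C. is_max_clique V E C}"

definition max_cliques_of_size :: "'a set \<Rightarrow> ('a \<times> 'a) set \<Rightarrow> nat \<Rightarrow> 'a set set" where
  "max_cliques_of_size V E d = {C \<in> max_cliques V E. card C = d}"

definition clique_sizes :: "'a set \<Rightarrow> ('a \<times> 'a) set \<Rightarrow> nat set" where
  "clique_sizes V E = card ` max_cliques V E"

definition induced_edges :: "('a \<times> 'a) set \<Rightarrow> 'a set \<Rightarrow> ('a \<times> 'a) set" where
  "induced_edges E C = E \<inter> (C \<times> C)"

definition SEF :: "'a \<Rightarrow> 'a \<Rightarrow> ('a \<times> 'a) set \<Rightarrow> ('a \<times> 'a) set" where
  "SEF i j E = (E - {(i, j)}) \<union> {(j, i)}"

definition DEM :: "'a \<Rightarrow> 'a \<Rightarrow> 'a \<Rightarrow> 'a \<Rightarrow> ('a \<times> 'a) set \<Rightarrow> ('a \<times> 'a) set" where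
  "DEM k l i j E = (E - {(k, l)}) \<union> {(j, i)}"

definition CP :: "('a \<Rightarrow> 'a) \<Rightarrow> 'a set \<Rightarrow> ('a \<times> 'a) set \<Rightarrow> ('a \<times> 'a) set" where
  "CP \<pi> C E = (E - induced_edges E C) \<union> map_prod \<pi> \<pi> ` induced_edges E C"

definition CS :: "('a \<Rightarrow> 'a) \<Rightarrow> 'a set \<Rightarrow> 'a set \<Rightarrow> ('a \<times> 'a) set \<Rightarrow> ('a \<times> 'a) set" where
  "CS \<pi> V1 V2 E =
     (E - (induced_edges E V1 \<union> induced_edges E V2))
     \<union> map_prod \<pi> \<pi> ` (induced_edges E V1 \<union> induced_edges E V2)"

definition swap_perms :: "'a set \<Rightarrow> 'a set \<Rightarrow> ('a \<Rightarrow> 'a) set" where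
  "swap_perms V1 V2 = {\<pi>. \<pi> permutes (V1 \<union> V2) \<and> \<pi> ` V1 = V2 \<and> \<pi> ` V2 = V1}"

definition T_SEF :: "('a \<times> 'a) set \<Rightarrow> ('a \<times> 'a) set \<Rightarrow> real" where
  "T_SEF H H' =
     (if single_edges H = {} then (if H' = H then 1 else 0)
      else real (card {(i, j) \<in> single_edges H. SEF i j H = H'}) / real (card (single_edges H)))"

definition T_DEM :: "('a \<times> 'a) set \<Rightarrow> ('a \<times> 'a) set \<Rightarrow> real" where
  "T_DEM H H' =
     (if single_edges H = {} \<or> double_edges H = {} then (if H' = H then 1 else 0)
      else real (card {((i, j), (k, l)) \<in> single_edges H \<times> double_edges H. DEM k l i j H = H'})
           / (real (card (single_edges H)) * real (card (double_edges H))))"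

text \<open>The clique moves use the maximal cliques of pr(G) (which coincide for all states)
  and a probability distribution p on the sizes of maximal cliques.\<close>

definition T_CP :: "'a set \<Rightarrow> ('a \<times> 'a) set \<Rightarrow> (nat \<Rightarrow> real)
                    \<Rightarrow> ('a \<times> 'a) set \<Rightarrow> ('a \<times> 'a) set \<Rightarrow> real" where
  "T_CP V E p H H' =
     (\<Sum>d\<in>clique_sizes V E. p d *
        (\<Sum>C\<in>max_cliques_of_size V E d.
           (1 / real (card (max_cliques_of_size V E d))) *
           (real (card {\<pi>. \<pi> permutes C \<and> CP \<pi> C H = H'}) / real (card {\<pi>. \<pi> permutes C}))))"

definition T_CS :: "'a set \<Rightarrow> ('a \<times> 'a) set \<Rightarrow> (nat \<Rightarrow> real)
                    \<Rightarrow> ('a \<times> 'a) set \<Rightarrow> ('a \<times> 'a) set \<Rightarrow> real" where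
  "T_CS V E p H H' =
     (\<Sum>d\<in>clique_sizes V E. p d *
        (\<Sum>V1\<in>max_cliques_of_size V E d. \<Sum>V2\<in>max_cliques_of_size V E d.
           (1 / real (card (max_cliques_of_size V E d)) ^ 2) *
           (real (card {\<pi> \<in> swap_perms V1 V2. CS \<pi> V1 V2 H = H'})
            / real (card (swap_perms V1 V2)))))"

definition T_u :: "'a set \<Rightarrow> ('a \<times> 'a) set \<Rightarrow> (nat \<Rightarrow> real) \<Rightarrow> real \<Rightarrow> real \<Rightarrow> real \<Rightarrow> real
                   \<Rightarrow> ('a \<times> 'a) set \<Rightarrow> ('a \<times> 'a) set \<Rightarrow> real" where
  "T_u V E p pSEF pDEM pCP pCS H H' =
     pSEF * T_SEF H H' + pDEM * T_DEM H H' + pCP * T_CP V E p H H' + pCS * T_CS V E p H H'"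

definition stochastic_on :: "'s set \<Rightarrow> ('s \<Rightarrow> 's \<Rightarrow> real) \<Rightarrow> bool" where
  "stochastic_on S T \<longleftrightarrow> finite S \<and>
     (\<forall>x\<in>S. \<forall>y. T x y \<ge> 0 \<and> (T x y > 0 \<longrightarrow> y \<in> S)) \<and> (\<forall>x\<in>S. (\<Sum>y\<in>S. T x y) = 1)"

fun mat_pow :: "'s set \<Rightarrow> ('s \<Rightarrow> 's \<Rightarrow> real) \<Rightarrow> nat \<Rightarrow> 's \<Rightarrow> 's \<Rightarrow> real" where
  "mat_pow S T 0 x y = (if x = y then 1 else 0)"
| "mat_pow S T (Suc n) x y = (\<Sum>z\<in>S. mat_pow S T n x z * T z y)"

definition irreducible_chain :: "'s set \<Rightarrow> ('s \<Rightarrow> 's \<Rightarrow> real) \<Rightarrow> bool" where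
  "irreducible_chain S T \<longleftrightarrow> (\<forall>x\<in>S. \<forall>y\<in>S. \<exists>n. mat_pow S T n x y > 0)"

definition aperiodic_chain :: "'s set \<Rightarrow> ('s \<Rightarrow> 's \<Rightarrow> real) \<Rightarrow> bool" where
  "aperiodic_chain S T \<longleftrightarrow> (\<forall>x\<in>S. Gcd {n. n \<ge> 1 \<and> mat_pow S T n x x > 0} = 1)"

definition ergodic_chain :: "'s set \<Rightarrow> ('s \<Rightarrow> 's \<Rightarrow> real) \<Rightarrow> bool" where
  "ergodic_chain S T \<longleftrightarrow> irreducible_chain S T \<and> aperiodic_chain S T"

definition stationary_distribution :: "'s set \<Rightarrow> ('s \<Rightarrow> 's \<Rightarrow> real) \<Rightarrow> ('s \<Rightarrow> real) \<Rightarrow> bool" where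
  "stationary_distribution S T \<mu> \<longleftrightarrow>
     (\<forall>x\<in>S. \<mu> x \<ge> 0) \<and> (\<Sum>x\<in>S. \<mu> x) = 1 \<and> (\<forall>y\<in>S. (\<Sum>x\<in>S. \<mu> x * T x y) = \<mu> y)"

end

theory Submission
  imports Defs
begin


lemma sum_card_fibres:
  assumes "finite A" "finite S" "f ` A \<subseteq> S"
  shows "(\<Sum>y\<in>S. card {a\<in>A. f a = y}) = card A"
proof -
  have "A = (\<Union>y\<in>S. {a\<in>A. f a = y})" using assms(3) by auto
  hence "card A = card (\<Union>y\<in>S. {a\<in>A. f a = y})" by simp
  also have "\<dots> = (\<Sum>y\<in>S. card {a\<in>A. f a = y})"
    by (rule card_UN_disjoint) (use assms in auto)
  finally show ?thesis by simp
qed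

lemma card_le_by_inj:
  assumes "inj_on f A" "f ` A \<subseteq> B" "finite B"
  shows "card A \<le> card B"
  using assms card_inj_on_le by blast

lemma pr_edges_sym: "pr_edges H = pr_edges H' \<Longrightarrow> H \<union> converse H = H' \<union> converse H'"
proof -
  assume a: "pr_edges H = pr_edges H'"
  have k: "(u,v) \<in> H \<union> converse H \<longleftrightarrow> {u,v} \<in> pr_edges H" for u v H
    unfolding pr_edges_def by (auto simp: doubleton_eq_iff)
  show ?thesis using k[of _ _ H] k[of _ _ H'] a by auto
qed

lemma double_edges_eq: "double_edges H = H \<inter> converse H"
  unfolding double_edges_def by auto

lemma single_edges_eq: "single_edges H = H - double_edges H"
  unfolding double_edges_def single_edges_def by auto

lemma card_double:
  assumes "finite H"
  shows "card (double_edges H) + card (H \<union> converse H) = 2 * card H"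
proof -
  have "card (H \<union> converse H) + card (H \<inter> converse H) = card H + card (converse H)"
    using card_Un_Int[of H "converse H"] assms by simp
  moreover have "card (converse H) = card H"
  proof -
    have "converse H = (\<lambda>(i,j). (j,i)) ` H" by (auto simp: image_iff)
    thus ?thesis using card_image[OF swap_inj_on[of H]] by simp
  qed
  ultimately show ?thesis by (simp add: double_edges_eq)
qed

lemma sym_pr: "H \<union> converse H = H' \<union> converse H' \<Longrightarrow> pr_edges H = pr_edges H'"
proof -
  assume a: "H \<union> converse H = H' \<union> converse H'"
  have k: "pr_edges H = {{u,v} | u v. (u,v) \<in> H \<union> converse H}" for H
    unfolding pr_edges_def by (auto simp: insert_commute)
  show ?thesis using k[of H] k[of H'] a by simp
qed

definition Mv :: "('a \<Rightarrow> 'a) \<Rightarrow> ('a \<times> 'a) set \<Rightarrow> ('a \<times> 'a) set \<Rightarrow> ('a \<times> 'a) set" where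
  "Mv \<pi> R H = (H - R) \<union> map_prod \<pi> \<pi> ` (H \<inter> R)"

lemma CS_Mv: "CS \<pi> V1 V2 H = Mv \<pi> (V1 \<times> V1 \<union> V2 \<times> V2) H"
proof -
  have "induced_edges H V1 \<union> induced_edges H V2 = H \<inter> (V1 \<times> V1 \<union> V2 \<times> V2)"
    unfolding induced_edges_def by auto
  thus ?thesis unfolding CS_def Mv_def by blast
qed

lemma CP_Mv: "CP \<pi> C H = Mv \<pi> (C \<times> C) H"
  unfolding CP_def Mv_def induced_edges_def by blast

lemma Mv_id: "Mv id R H = H"
  unfolding Mv_def by (auto simp: map_prod.id)

lemma setaux: assumes "P \<subseteq> R" "H' = (H - R) \<union> P" shows "H' \<inter> R = P" "H' - R = H - R"
  using assms by auto

lemma map_prod_inv_image: assumes "\<pi> permutes U" shows "map_prod (inv \<pi>) (inv \<pi>) ` map_prod \<pi> \<pi> ` X = X"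
  by (simp add: image_image permutes_inverses(2)[OF assms] map_prod_def split_beta)

lemma Mv_inv:
  assumes "\<pi> permutes U" "map_prod \<pi> \<pi> ` R = R" "Mv \<pi> R H = H'"
  shows "Mv (inv \<pi>) R H' = H"
proof -
  have 1: "map_prod \<pi> \<pi> ` (H \<inter> R) \<subseteq> R" using assms(2) by (metis Int_lower2 image_mono)
  have h': "H' = (H - R) \<union> map_prod \<pi> \<pi> ` (H \<inter> R)" using assms(3) unfolding Mv_def by simp
  note ab = setaux[OF 1 h']
  have "Mv (inv \<pi>) R H' = (H - R) \<union> (H \<inter> R)" unfolding Mv_def ab map_prod_inv_image[OF assms(1)] ..
  thus ?thesis by (simp add: Un_Diff_Int)
qed




locale gs = fixes V :: "'a set" and E :: "('a \<times> 'a) set"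
  assumes sd: "simple_digraph V E"
begin

abbreviation S where "S \<equiv> G0inf V E"

lemma finV: "finite V" using sd unfolding simple_digraph_def by simp

lemma S_iff: "H \<in> S \<longleftrightarrow> H \<subseteq> V \<times> V \<and> (\<forall>u. (u,u) \<notin> H) \<and> pr_edges H = pr_edges E \<and> card H = card E"
  unfolding G0inf_def simple_digraph_def using finV by auto

lemma S_sub: "H \<in> S \<Longrightarrow> H \<subseteq> V \<times> V" using S_iff by blast
lemma S_noloop: "H \<in> S \<Longrightarrow> (u,u) \<notin> H" using S_iff by blast
lemma S_fin: "H \<in> S \<Longrightarrow> finite H" using S_sub finV by (meson finite_SigmaI finite_subset)
lemma S_pr: "H \<in> S \<Longrightarrow> pr_edges H = pr_edges E" using S_iff by blast
lemma S_card: "H \<in> S \<Longrightarrow> card H = card E" using S_iff by blast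
lemma E_in: "E \<in> S" using sd unfolding G0inf_def by simp
lemma finite_S: "finite S"
proof -
  have "S \<subseteq> Pow (V \<times> V)" using S_sub by blast
  thus ?thesis using finV by (meson finite_Pow_iff finite_SigmaI finite_subset)
qed
lemma S_symcl: "H \<in> S \<Longrightarrow> H \<union> converse H = E \<union> converse E"
  by (rule pr_edges_sym[OF S_pr])
lemma in_S_intro:
  assumes "H \<subseteq> V \<times> V" "\<And>u. (u,u) \<notin> H" "H \<union> converse H = E \<union> converse E" "card H = card E"
  shows "H \<in> S"
  unfolding S_iff using assms sym_pr[OF assms(3)] by simp

lemma card_double_S: "H \<in> S \<Longrightarrow> card (double_edges H) = card (double_edges E)"
  using card_double[OF S_fin] S_symcl S_card E_in
  by (metis add_right_cancel)

lemma card_single_S: "H \<in> S \<Longrightarrow> card (single_edges H) = card (single_edges E)"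
proof -
  have "card (single_edges H) = card H - card (double_edges H)" if "H \<in> S" for H
    unfolding single_edges_eq using S_fin[OF that]
    by (simp add: card_Diff_subset double_edges_eq finite_subset)
  thus "H \<in> S \<Longrightarrow> ?thesis" using E_in card_double_S S_card by metis
qed

lemma fin_single: "H \<in> S \<Longrightarrow> finite (single_edges H)"
  using S_fin single_edges_eq by (metis finite_Diff)
lemma fin_double: "H \<in> S \<Longrightarrow> finite (double_edges H)"
  using S_fin double_edges_eq by (metis finite_Int)

lemma single_empty_S: "H \<in> S \<Longrightarrow> single_edges H = {} \<longleftrightarrow> single_edges E = {}"
  using card_single_S fin_single E_in by (metis card_0_eq)
lemma double_empty_S: "H \<in> S \<Longrightarrow> double_edges H = {} \<longleftrightarrow> double_edges E = {}"
  using card_double_S fin_double E_in by (metis card_0_eq)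

lemma SEF_in:
  assumes "H \<in> S" "(i,j) \<in> single_edges H"
  shows "SEF i j H \<in> S"
proof (rule in_S_intro)
  have ij: "(i,j) \<in> H" "(j,i) \<notin> H" using assms(2) unfolding single_edges_def by auto
  have sub: "H \<subseteq> V \<times> V" using S_sub assms(1) by blast
  show "SEF i j H \<subseteq> V \<times> V" unfolding SEF_def using ij sub by auto
  show "(u,u) \<notin> SEF i j H" for u unfolding SEF_def using ij S_noloop[OF assms(1)] by auto
  have "SEF i j H \<union> converse (SEF i j H) = H \<union> converse H" unfolding SEF_def using ij by auto
  thus "SEF i j H \<union> converse (SEF i j H) = E \<union> converse E" using S_symcl assms(1) by simp
  have "card (SEF i j H) = card (H - {(i,j)}) + 1" unfolding SEF_def using ij S_fin[OF assms(1)] by simp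
  also have "\<dots> = card H" using ij S_fin[OF assms(1)] card_Suc_Diff1 by (metis Suc_eq_plus1)
  finally show "card (SEF i j H) = card E" using S_card assms(1) by simp
qed

lemma DEM_in:
  assumes "H \<in> S" "(i,j) \<in> single_edges H" "(k,l) \<in> double_edges H"
  shows "DEM k l i j H \<in> S"
proof (rule in_S_intro)
  have ij: "(i,j) \<in> H" "(j,i) \<notin> H" using assms(2) unfolding single_edges_def by auto
  have kl: "(k,l) \<in> H" "(l,k) \<in> H" using assms(3) unfolding double_edges_def by auto
  have ne: "(i,j) \<noteq> (k,l)" "(j,i) \<noteq> (l,k)" "k \<noteq> l" using ij kl S_noloop[OF assms(1)] by auto
  have sub: "H \<subseteq> V \<times> V" using S_sub assms(1) by blast
  show "DEM k l i j H \<subseteq> V \<times> V" unfolding DEM_def using ij sub by auto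
  show "(u,u) \<notin> DEM k l i j H" for u unfolding DEM_def using ij S_noloop[OF assms(1)] by auto
  have "DEM k l i j H \<union> converse (DEM k l i j H) = H \<union> converse H" unfolding DEM_def using ij kl ne by auto
  thus "DEM k l i j H \<union> converse (DEM k l i j H) = E \<union> converse E" using S_symcl assms(1) by simp
  have "card (DEM k l i j H) = card (H - {(k,l)}) + 1" unfolding DEM_def using ij S_fin[OF assms(1)] by simp
  also have "\<dots> = card H" using kl S_fin[OF assms(1)] card_Suc_Diff1 by (metis Suc_eq_plus1)
  finally show "card (DEM k l i j H) = card E" using S_card assms(1) by simp
qed

end



lemma converse_map_prod: "converse (map_prod f f ` A) = map_prod f f ` converse A"
  by (auto simp: image_iff)

lemma inj_map_prod_perm: "\<pi> permutes U \<Longrightarrow> inj (map_prod \<pi> \<pi>)"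
  using map_prod_inj_on[of \<pi> UNIV \<pi> UNIV] permutes_inj by fastforce

lemma Mv_props:
  assumes perm: "\<pi> permutes U" and RU: "R \<subseteq> U \<times> U" and mR: "map_prod \<pi> \<pi> ` R = R"
    and symR: "converse R = R"
    and noloop: "\<And>u. (u,u) \<notin> H"
    and compl: "\<And>u v. (u,v) \<in> R \<Longrightarrow> u \<noteq> v \<Longrightarrow> (u,v) \<in> H \<or> (v,u) \<in> H"
    and finH: "finite H"
  shows "Mv \<pi> R H \<union> converse (Mv \<pi> R H) = H \<union> converse H"
    and "card (Mv \<pi> R H) = card H"
    and "(u,u) \<notin> Mv \<pi> R H"
    and "Mv \<pi> R H \<subseteq> (H - R) \<union> U \<times> U"
proof -
  define P where "P = map_prod \<pi> \<pi> ` (H \<inter> R)"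
  have injp: "inj \<pi>" using perm permutes_inj by blast
  have injM: "inj (map_prod \<pi> \<pi>)" using inj_map_prod_perm[OF perm] .
  have PR: "P \<subseteq> R" unfolding P_def using mR by (metis Int_lower2 image_mono)
  have Mv: "Mv \<pi> R H = (H - R) \<union> P" unfolding Mv_def P_def ..
  define D where "D = {(u,v) \<in> R. u \<noteq> v}"
  have d1: "(H \<inter> R) \<union> converse (H \<inter> R) = D"
  proof
    show "(H \<inter> R) \<union> converse (H \<inter> R) \<subseteq> D"
    proof
      fix x assume "x \<in> (H \<inter> R) \<union> converse (H \<inter> R)"
      then obtain a b where x: "x = (a,b)" "(a,b) \<in> H \<inter> R \<or> (b,a) \<in> H \<inter> R" by (cases x) auto
      have "a \<noteq> b" using x noloop by auto
      moreover have "(a,b) \<in> R" using x symR by auto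
      ultimately show "x \<in> D" unfolding D_def x by simp
    qed
    show "D \<subseteq> (H \<inter> R) \<union> converse (H \<inter> R)"
    proof
      fix x assume "x \<in> D"
      then obtain a b where x: "x = (a,b)" "(a,b) \<in> R" "a \<noteq> b" unfolding D_def by auto
      have "(b,a) \<in> R" using x symR by auto
      thus "x \<in> (H \<inter> R) \<union> converse (H \<inter> R)" using compl[OF x(2,3)] x by auto
    qed
  qed
  have d3: "map_prod \<pi> \<pi> ` D = D"
  proof
    show "map_prod \<pi> \<pi> ` D \<subseteq> D"
    proof
      fix x assume "x \<in> map_prod \<pi> \<pi> ` D"
      then obtain a b where x: "x = (\<pi> a, \<pi> b)" "(a,b) \<in> R" "a \<noteq> b" unfolding D_def by auto
      have "(\<pi> a, \<pi> b) \<in> R" using mR x(2) by (metis map_prod_simp rev_image_eqI)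
      moreover have "\<pi> a \<noteq> \<pi> b" using injp x(3) by (meson injD)
      ultimately show "x \<in> D" unfolding D_def x by simp
    qed
    show "D \<subseteq> map_prod \<pi> \<pi> ` D"
    proof
      fix x assume "x \<in> D"
      then obtain u v where x: "x = (u,v)" "(u,v) \<in> R" "u \<noteq> v" unfolding D_def by auto
      then obtain y where y: "y \<in> R" "(u,v) = map_prod \<pi> \<pi> y" using mR by (metis imageE)
      obtain a b where ab: "y = (a,b)" by (cases y)
      have "a \<noteq> b" using y ab x(3) by auto
      hence "y \<in> D" using y ab unfolding D_def by simp
      thus "x \<in> map_prod \<pi> \<pi> ` D" using y x by simp
    qed
  qed
  have PP: "P \<union> converse P = D"
    unfolding P_def converse_map_prod image_Un[symmetric] d1 d3 ..
  have "Mv \<pi> R H \<union> converse (Mv \<pi> R H) = ((H - R) \<union> converse (H - R)) \<union> (P \<union> converse P)"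
    unfolding Mv by auto
  also have "\<dots> = ((H - R) \<union> converse (H - R)) \<union> ((H \<inter> R) \<union> converse (H \<inter> R))"
    unfolding PP d1 ..
  also have "\<dots> = H \<union> converse H" by auto
  finally show "Mv \<pi> R H \<union> converse (Mv \<pi> R H) = H \<union> converse H" .
  have "card (Mv \<pi> R H) = card (H - R) + card P"
    unfolding Mv using PR finH by (subst card_Un_disjoint) (auto simp: P_def)
  also have "card P = card (H \<inter> R)" unfolding P_def
    using injM by (meson card_image inj_on_subset subset_UNIV)
  also have "card (H - R) + card (H \<inter> R) = card H"
    using finH by (metis Diff_Diff_Int card_Diff_subset_Int finite_Diff inf_commute le_add_diff_inverse2 card_mono Int_lower1 add.commute card_Un_disjoint Un_Diff_Int Diff_Int_distrib2 Diff_disjoint)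
  finally show "card (Mv \<pi> R H) = card H" .
  show "(u,u) \<notin> Mv \<pi> R H"
  proof
    assume "(u,u) \<in> Mv \<pi> R H"
    then consider "(u,u) \<in> H" | "(u,u) \<in> P" unfolding Mv by auto
    thus False
    proof cases
      case 1 then show ?thesis using noloop by blast
    next
      case 2
      then obtain a b where "(a,b) \<in> H" "\<pi> a = u" "\<pi> b = u" unfolding P_def by auto
      thus ?thesis using injp noloop by (metis injD)
    qed
  qed
  show "Mv \<pi> R H \<subseteq> (H - R) \<union> U \<times> U" unfolding Mv using PR RU by auto
qed




lemma swap_perms_ne:
  assumes "finite V1" "finite V2" "card V1 = card V2"
  shows "swap_perms V1 V2 \<noteq> {}"
proof -
  define A where "A = V1 - V2"
  define B where "B = V2 - V1"
  have "card A = card V1 - card (V1 \<inter> V2)" unfolding A_def using assms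
    by (metis Diff_Int card_Diff_subset_Int finite_Int inf_le1 Diff_Int_distrib Int_absorb)
  moreover have "card B = card V2 - card (V1 \<inter> V2)" unfolding B_def using assms
    by (metis card_Diff_subset_Int finite_Int inf_commute)
  ultimately have "card A = card B" using assms by simp
  moreover have "finite A" "finite B" unfolding A_def B_def using assms by auto
  ultimately obtain g where g: "bij_betw g A B" using finite_same_card_bij by blast
  define \<pi> where "\<pi> x = (if x \<in> A then g x else if x \<in> B then inv_into A g x else x)" for x
  have AB: "A \<inter> B = {}" unfolding A_def B_def by auto
  have gA: "x \<in> A \<Longrightarrow> g x \<in> B" for x using g bij_betwE by blast
  have iB: "x \<in> B \<Longrightarrow> inv_into A g x \<in> A" for x using bij_betw_inv_into g bij_betwE by blast
  have inv: "\<pi> (\<pi> x) = x" for x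
  proof -
    consider "x \<in> A" | "x \<in> B" | "x \<notin> A" "x \<notin> B" by blast
    thus ?thesis
    proof cases
      case 1
      then have "g x \<notin> A" using gA AB by blast
      then show ?thesis unfolding \<pi>_def using 1 gA g
        by (simp add: bij_betw_def inv_into_f_f)
    next
      case 2
      then have "inv_into A g x \<in> A" using iB by blast
      then show ?thesis unfolding \<pi>_def using 2 AB g
        by (auto simp add: bij_betw_def f_inv_into_f)
    qed (simp add: \<pi>_def)
  qed
  have perm: "\<pi> permutes (V1 \<union> V2)"
    unfolding permutes_def
  proof (intro conjI allI impI)
    show "x \<notin> V1 \<union> V2 \<Longrightarrow> \<pi> x = x" for x unfolding \<pi>_def A_def B_def by simp
    show "\<exists>!x. \<pi> x = y" for y
      by (metis inv)
  qed
  have s1: "\<pi> ` V1 \<subseteq> V2"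
  proof
    fix y assume "y \<in> \<pi> ` V1"
    then obtain x where x: "x \<in> V1" "y = \<pi> x" by blast
    show "y \<in> V2"
    proof (cases "x \<in> A")
      case True thus ?thesis using gA x unfolding \<pi>_def B_def by simp
    next
      case False thus ?thesis using x unfolding \<pi>_def A_def B_def by auto
    qed
  qed
  have s2: "\<pi> ` V2 \<subseteq> V1"
  proof
    fix y assume "y \<in> \<pi> ` V2"
    then obtain x where x: "x \<in> V2" "y = \<pi> x" by blast
    show "y \<in> V1"
    proof (cases "x \<in> B")
      case True thus ?thesis using iB x AB unfolding \<pi>_def A_def by auto
    next
      case False thus ?thesis using x unfolding \<pi>_def A_def B_def by auto
    qed
  qed
  have "\<pi> ` \<pi> ` X = X" for X using inv by (simp add: image_image)
  hence "\<pi> ` V1 = V2" "\<pi> ` V2 = V1" using s1 s2 by (metis image_mono subset_antisym)+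
  thus ?thesis using perm unfolding swap_perms_def by blast
qed

lemma swap_perms_inv: "\<pi> \<in> swap_perms V1 V2 \<Longrightarrow> inv \<pi> \<in> swap_perms V1 V2"
proof -
  assume a: "\<pi> \<in> swap_perms V1 V2"
  hence p: "\<pi> permutes (V1 \<union> V2)" "\<pi> ` V1 = V2" "\<pi> ` V2 = V1" unfolding swap_perms_def by auto
  have i: "inv \<pi> ` \<pi> ` X = X" for X using permutes_inj[OF p(1)] by (simp add: image_inv_f_f)
  show ?thesis unfolding swap_perms_def using permutes_inv[OF p(1)] i[of V1] i[of V2] p(2,3) by simp
qed

lemma swap_perms_R: "\<pi> \<in> swap_perms V1 V2 \<Longrightarrow>
  map_prod \<pi> \<pi> ` (V1 \<times> V1 \<union> V2 \<times> V2) = V1 \<times> V1 \<union> V2 \<times> V2"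
  unfolding swap_perms_def image_Un by (auto simp: map_prod_surj_on)

lemma swap_perms_fin: "finite V1 \<Longrightarrow> finite V2 \<Longrightarrow> finite (swap_perms V1 V2)"
proof -
  assume "finite V1" "finite V2"
  hence "finite {\<pi>. \<pi> permutes (V1 \<union> V2)}" using finite_permutations by blast
  moreover have "swap_perms V1 V2 \<subseteq> {\<pi>. \<pi> permutes (V1 \<union> V2)}" unfolding swap_perms_def by blast
  ultimately show ?thesis using finite_subset by blast
qed

lemma swap_perms_same: "swap_perms C C = {\<pi>. \<pi> permutes C}"
  unfolding swap_perms_def using permutes_image by auto

lemma id_swap: "id \<in> swap_perms C C" unfolding swap_perms_same by (simp add: permutes_id)

context gs begin

lemma mc_sub: "C \<in> max_cliques V E \<Longrightarrow> C \<subseteq> V"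
  unfolding max_cliques_def is_max_clique_def is_clique_def by blast
lemma mc_fin: "C \<in> max_cliques V E \<Longrightarrow> finite C"
  using mc_sub finV finite_subset by blast
lemma fin_mc: "finite (max_cliques V E)"
proof -
  have "max_cliques V E \<subseteq> Pow V" using mc_sub by blast
  thus ?thesis using finV by (meson finite_Pow_iff finite_subset)
qed

lemma mc_compl:
  assumes "C \<in> max_cliques V E" "H \<in> S" "u \<in> C" "v \<in> C" "u \<noteq> v"
  shows "(u,v) \<in> H \<or> (v,u) \<in> H"
proof -
  have "{u,v} \<in> pr_edges E" using assms unfolding max_cliques_def is_max_clique_def is_clique_def by blast
  hence "{u,v} \<in> pr_edges H" using S_pr[OF assms(2)] by simp
  then obtain a b where "{u,v} = {a,b}" "(a,b) \<in> H" unfolding pr_edges_def by blast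
  thus ?thesis by (metis doubleton_eq_iff)
qed

lemma CS_in:
  assumes "H \<in> S" "V1 \<in> max_cliques V E" "V2 \<in> max_cliques V E" "\<pi> \<in> swap_perms V1 V2"
  shows "CS \<pi> V1 V2 H \<in> S"
proof -
  define R where "R = V1 \<times> V1 \<union> V2 \<times> V2"
  have perm: "\<pi> permutes (V1 \<union> V2)" using assms(4) unfolding swap_perms_def by blast
  have RU: "R \<subseteq> (V1 \<union> V2) \<times> (V1 \<union> V2)" unfolding R_def by blast
  have mR: "map_prod \<pi> \<pi> ` R = R" unfolding R_def using swap_perms_R[OF assms(4)] .
  have symR: "converse R = R" unfolding R_def by auto
  have compl: "(u,v) \<in> H \<or> (v,u) \<in> H" if "(u,v) \<in> R" "u \<noteq> v" for u v
    using that mc_compl[OF assms(2) assms(1)] mc_compl[OF assms(3) assms(1)] unfolding R_def by blast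
  note M = Mv_props[OF perm RU mR symR S_noloop[OF assms(1)] compl S_fin[OF assms(1)]]
  have U: "V1 \<union> V2 \<subseteq> V" using mc_sub assms(2,3) by blast
  show ?thesis unfolding CS_Mv R_def[symmetric]
  proof (rule in_S_intro)
    show "Mv \<pi> R H \<subseteq> V \<times> V" using M(4) U S_sub[OF assms(1)] by blast
    show "(u,u) \<notin> Mv \<pi> R H" for u using M(3) .
    show "Mv \<pi> R H \<union> converse (Mv \<pi> R H) = E \<union> converse E" using M(1) S_symcl[OF assms(1)] by simp
    show "card (Mv \<pi> R H) = card E" using M(2) S_card[OF assms(1)] by simp
  qed
qed

lemma CS_inv:
  assumes "\<pi> \<in> swap_perms V1 V2" "CS \<pi> V1 V2 H = H'"
  shows "CS (inv \<pi>) V1 V2 H' = H"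
  using Mv_inv[of \<pi> "V1 \<union> V2", OF _ swap_perms_R[OF assms(1)]] assms
  unfolding CS_Mv swap_perms_def by blast

lemma CS_id: "CS id V1 V2 H = H" unfolding CS_Mv Mv_id ..

end



definition cs :: "'a set \<Rightarrow> 'a set \<Rightarrow> ('a \<times> 'a) set \<Rightarrow> ('a \<times> 'a) set \<Rightarrow> nat" where
  "cs V1 V2 H H' = card {\<pi> \<in> swap_perms V1 V2. CS \<pi> V1 V2 H = H'}"

lemma sw1: "(\<Sum>y\<in>S. \<Sum>i\<in>I. (a i::real) * f i y) = (\<Sum>i\<in>I. a i * (\<Sum>y\<in>S. f i y))"
  unfolding sum_distrib_left by (rule sum.swap)

lemma sw0: "(\<Sum>y\<in>S. \<Sum>i\<in>I. f i y) = (\<Sum>i\<in>I. (\<Sum>y\<in>S. f i y))"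
  by (rule sum.swap)

lemma CS_inv0:
  assumes "\<pi> \<in> swap_perms V1 V2" "CS \<pi> V1 V2 H = H'"
  shows "CS (inv \<pi>) V1 V2 H' = H"
  using Mv_inv[of \<pi> "V1 \<union> V2", OF _ swap_perms_R[OF assms(1)]] assms
  unfolding CS_Mv swap_perms_def by blast

lemma cs_sym:
  assumes "finite V1" "finite V2"
  shows "cs V1 V2 H H' = cs V1 V2 H' H"
proof -
  have le: "cs V1 V2 H H' \<le> cs V1 V2 H' H" for H H'
    unfolding cs_def
  proof (rule card_inj_on_le[where f = inv])
    show "inj_on inv {\<pi> \<in> swap_perms V1 V2. CS \<pi> V1 V2 H = H'}"
      by (rule inj_onI) (metis (no_types, lifting) mem_Collect_eq permutes_inv_inv swap_perms_def)
    show "inv ` {\<pi> \<in> swap_perms V1 V2. CS \<pi> V1 V2 H = H'} \<subseteq> {\<pi> \<in> swap_perms V1 V2. CS \<pi> V1 V2 H' = H}"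
    proof
      fix x assume "x \<in> inv ` {\<pi> \<in> swap_perms V1 V2. CS \<pi> V1 V2 H = H'}"
      then obtain \<pi> where "\<pi> \<in> swap_perms V1 V2" "CS \<pi> V1 V2 H = H'" "x = inv \<pi>" by blast
      thus "x \<in> {\<pi> \<in> swap_perms V1 V2. CS \<pi> V1 V2 H' = H}" using swap_perms_inv CS_inv0 by blast
    qed
    show "finite {\<pi> \<in> swap_perms V1 V2. CS \<pi> V1 V2 H' = H}"
      using swap_perms_fin[OF assms] by simp
  qed
  show ?thesis using le[of H H'] le[of H' H] by simp
qed




lemma SEF_rev:
  assumes "(i,j) \<in> single_edges H" "SEF i j H = H'"
  shows "(j,i) \<in> single_edges H' \<and> SEF j i H' = H"
proof -
  have ij: "(i,j) \<in> H" "(j,i) \<notin> H" using assms(1) unfolding single_edges_def by auto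
  hence ne: "i \<noteq> j" by auto
  have h': "H' = (H - {(i,j)}) \<union> {(j,i)}" using assms(2) unfolding SEF_def by simp
  have "(j,i) \<in> H'" "(i,j) \<notin> H'" using h' ne by auto
  hence "(j,i) \<in> single_edges H'" unfolding single_edges_def by simp
  moreover have "SEF j i H' = H" unfolding SEF_def h' using ij ne by auto
  ultimately show ?thesis by simp
qed

lemma fin_pair: "finite A \<Longrightarrow> finite {(i, j) \<in> A. P i j}"
  by (rule finite_subset[of _ A]) auto

lemma card_pos_mem: "finite A \<Longrightarrow> x \<in> A \<Longrightarrow> 0 < card A"
  by (auto simp: card_gt_0_iff)

lemma fibres_pair:
  "{(i, j) \<in> A. g i j = y} = {a \<in> A. case_prod g a = y}" by auto

context gs begin

lemma T_SEF_nn: "T_SEF H H' \<ge> 0" unfolding T_SEF_def by simp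

lemma T_SEF_out: assumes "H \<in> S" "H' \<notin> S" shows "T_SEF H H' = 0"
proof (cases "single_edges H = {}")
  case True thus ?thesis unfolding T_SEF_def using assms by auto
next
  case False
  have e: "{(i, j) \<in> single_edges H. SEF i j H = H'} = {}" using SEF_in[OF assms(1)] assms(2) by auto
  show ?thesis unfolding T_SEF_def e using False by simp
qed

lemma T_SEF_sum: assumes "H \<in> S" shows "(\<Sum>H'\<in>S. T_SEF H H') = 1"
proof (cases "single_edges H = {}")
  case True thus ?thesis unfolding T_SEF_def using assms finite_S by simp
next
  case False
  have fin: "finite (single_edges H)" using fin_single assms by blast
  have "(\<Sum>H'\<in>S. T_SEF H H') = (\<Sum>H'\<in>S. real (card {(i, j) \<in> single_edges H. SEF i j H = H'})) / real (card (single_edges H))"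
    unfolding T_SEF_def using False by (simp add: sum_divide_distrib)
  also have "(\<Sum>H'\<in>S. real (card {(i, j) \<in> single_edges H. SEF i j H = H'})) = real (card (single_edges H))"
    unfolding fibres_pair of_nat_sum[symmetric]
    by (subst sum_card_fibres) (use fin finite_S SEF_in[OF assms] in auto)
  finally show ?thesis using False fin by simp
qed

lemma T_SEF_sym: assumes "H \<in> S" "H' \<in> S" shows "T_SEF H H' = T_SEF H' H"
proof -
  have le: "card {(i, j) \<in> single_edges A. SEF i j A = B} \<le> card {(i, j) \<in> single_edges B. SEF i j B = A}"
    if "B \<in> S" for A B
  proof (rule card_inj_on_le[where f = "\<lambda>(i,j). (j,i)"])
    show "inj_on (\<lambda>(i, j). (j, i)) {(i, j) \<in> single_edges A. SEF i j A = B}" by (rule swap_inj_on)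
    show "(\<lambda>(i, j). (j, i)) ` {(i, j) \<in> single_edges A. SEF i j A = B} \<subseteq> {(i, j) \<in> single_edges B. SEF i j B = A}"
      using SEF_rev by fastforce
    show "finite {(i, j) \<in> single_edges B. SEF i j B = A}"
      using fin_single[OF that] by (rule fin_pair)
  qed
  have eq: "card {(i, j) \<in> single_edges H. SEF i j H = H'} = card {(i, j) \<in> single_edges H'. SEF i j H' = H}"
    using le[of H' H] le[of H H'] assms by simp
  have "card (single_edges H) = card (single_edges H')" using card_single_S assms by simp
  moreover have "single_edges H = {} \<longleftrightarrow> single_edges H' = {}" using single_empty_S assms by simp
  ultimately show ?thesis unfolding T_SEF_def eq by auto
qed

lemma T_SEF_pos: assumes "H \<in> S" "(i,j) \<in> single_edges H" shows "T_SEF H (SEF i j H) > 0"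
proof -
  have fin: "finite (single_edges H)" using fin_single assms by blast
  have m: "(i,j) \<in> {(i', j') \<in> single_edges H. SEF i' j' H = SEF i j H}" using assms by simp
  have f: "finite {(i', j') \<in> single_edges H. SEF i' j' H = SEF i j H}"
    using fin by (rule fin_pair)
  have "card {(i', j') \<in> single_edges H. SEF i' j' H = SEF i j H} > 0"
    using card_pos_mem[OF f m] .
  moreover have "card (single_edges H) > 0" using card_pos_mem[OF fin assms(2)] .
  moreover have "single_edges H \<noteq> {}" using assms(2) by blast
  ultimately show ?thesis unfolding T_SEF_def by (simp only: if_False divide_pos_pos of_nat_0_less_iff)
qed

end



lemma fin_quad: "finite A \<Longrightarrow> finite {((i, j), (k, l)) \<in> A. P i j k l}"
  by (rule finite_subset[of _ A]) auto

lemma fibres_quad: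
  "{((i, j), (k, l)) \<in> A. g i j k l = y} = {a \<in> A. (case a of ((i, j), (k, l)) \<Rightarrow> g i j k l) = y}"
  by auto

context gs begin

lemma DEM_rev:
  assumes "H \<in> S" "(i,j) \<in> single_edges H" "(k,l) \<in> double_edges H" "DEM k l i j H = H'"
  shows "(l,k) \<in> single_edges H' \<and> (j,i) \<in> double_edges H' \<and> DEM j i l k H' = H"
proof -
  have ij: "(i,j) \<in> H" "(j,i) \<notin> H" using assms(2) unfolding single_edges_def by auto
  have kl: "(k,l) \<in> H" "(l,k) \<in> H" using assms(3) unfolding double_edges_def by auto
  have ne: "(i,j) \<noteq> (k,l)" "(j,i) \<noteq> (l,k)" "k \<noteq> l" "i \<noteq> j" using ij kl S_noloop[OF assms(1)] by auto
  have h': "H' = (H - {(k,l)}) \<union> {(j,i)}" using assms(4) unfolding DEM_def by simp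
  have "(l,k) \<in> H'" "(k,l) \<notin> H'" "(j,i) \<in> H'" "(i,j) \<in> H'" using h' ne ij kl by auto
  hence "(l,k) \<in> single_edges H'" "(j,i) \<in> double_edges H'"
    unfolding single_edges_def double_edges_def by auto
  moreover have "DEM j i l k H' = H" unfolding DEM_def h' using ij kl ne by auto
  ultimately show ?thesis by simp
qed

lemma T_DEM_nn: "T_DEM H H' \<ge> 0" unfolding T_DEM_def by simp

lemma T_DEM_out: assumes "H \<in> S" "H' \<notin> S" shows "T_DEM H H' = 0"
proof (cases "single_edges H = {} \<or> double_edges H = {}")
  case True thus ?thesis unfolding T_DEM_def using assms by auto
next
  case False
  have e: "{((i, j), (k, l)) \<in> single_edges H \<times> double_edges H. DEM k l i j H = H'} = {}"
    using DEM_in[OF assms(1)] assms(2) by auto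
  show ?thesis unfolding T_DEM_def e using False by simp
qed

lemma T_DEM_sum: assumes "H \<in> S" shows "(\<Sum>H'\<in>S. T_DEM H H') = 1"
proof (cases "single_edges H = {} \<or> double_edges H = {}")
  case True thus ?thesis unfolding T_DEM_def using assms finite_S by simp
next
  case False
  have fin: "finite (single_edges H \<times> double_edges H)" using fin_single fin_double assms by blast
  have "(\<Sum>H'\<in>S. T_DEM H H') = (\<Sum>H'\<in>S. real (card {((i, j), (k, l)) \<in> single_edges H \<times> double_edges H. DEM k l i j H = H'}))
     / (real (card (single_edges H)) * real (card (double_edges H)))"
    unfolding T_DEM_def using False by (simp add: sum_divide_distrib)
  also have "(\<Sum>H'\<in>S. real (card {((i, j), (k, l)) \<in> single_edges H \<times> double_edges H. DEM k l i j H = H'}))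
      = real (card (single_edges H \<times> double_edges H))"
    unfolding fibres_quad of_nat_sum[symmetric]
    by (subst sum_card_fibres) (use fin finite_S DEM_in[OF assms] in auto)
  moreover have "card (single_edges H) > 0" "card (double_edges H) > 0"
    using False fin_single[OF assms] fin_double[OF assms] card_gt_0_iff by blast+
  ultimately show ?thesis by (simp add: card_cartesian_product)
qed

lemma T_DEM_sym: assumes "H \<in> S" "H' \<in> S" shows "T_DEM H H' = T_DEM H' H"
proof -
  have le: "card {((i, j), (k, l)) \<in> single_edges A \<times> double_edges A. DEM k l i j A = B}
     \<le> card {((i, j), (k, l)) \<in> single_edges B \<times> double_edges B. DEM k l i j B = A}"
    if "A \<in> S" "B \<in> S" for A B
  proof (rule card_inj_on_le[where f = "\<lambda>((i,j),(k,l)). ((l,k),(j,i))"])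
    show "inj_on (\<lambda>((i,j),(k,l)). ((l,k),(j,i))) {((i, j), (k, l)) \<in> single_edges A \<times> double_edges A. DEM k l i j A = B}"
      by (rule inj_onI) auto
    show "(\<lambda>((i,j),(k,l)). ((l,k),(j,i))) ` {((i, j), (k, l)) \<in> single_edges A \<times> double_edges A. DEM k l i j A = B}
       \<subseteq> {((i, j), (k, l)) \<in> single_edges B \<times> double_edges B. DEM k l i j B = A}"
    proof
      fix x assume "x \<in> (\<lambda>((i,j),(k,l)). ((l,k),(j,i))) ` {((i, j), (k, l)) \<in> single_edges A \<times> double_edges A. DEM k l i j A = B}"
      then obtain i j k l where x: "x = ((l,k),(j,i))" "(i,j) \<in> single_edges A" "(k,l) \<in> double_edges A" "DEM k l i j A = B"
        by auto
      show "x \<in> {((i, j), (k, l)) \<in> single_edges B \<times> double_edges B. DEM k l i j B = A}"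
        using DEM_rev[OF that(1) x(2,3,4)] x(1) by simp
    qed
    show "finite {((i, j), (k, l)) \<in> single_edges B \<times> double_edges B. DEM k l i j B = A}"
      using fin_single[OF that(2)] fin_double[OF that(2)] by (intro fin_quad) simp
  qed
  have eq: "card {((i, j), (k, l)) \<in> single_edges H \<times> double_edges H. DEM k l i j H = H'}
     = card {((i, j), (k, l)) \<in> single_edges H' \<times> double_edges H'. DEM k l i j H' = H}"
    using le[of H' H] le[of H H'] assms by simp
  have "card (single_edges H) = card (single_edges H')" using card_single_S assms by simp
  moreover have "card (double_edges H) = card (double_edges H')" using card_double_S assms by simp
  moreover have "single_edges H = {} \<longleftrightarrow> single_edges H' = {}" using single_empty_S assms by simp
  moreover have "double_edges H = {} \<longleftrightarrow> double_edges H' = {}" using double_empty_S assms by simp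
  ultimately show ?thesis unfolding T_DEM_def eq by auto
qed

lemma T_DEM_pos: assumes "H \<in> S" "(i,j) \<in> single_edges H" "(k,l) \<in> double_edges H"
  shows "T_DEM H (DEM k l i j H) > 0"
proof -
  have fin: "finite (single_edges H \<times> double_edges H)" using fin_single fin_double assms by blast
  have m: "((i,j),(k,l)) \<in> {((i', j'), (k', l')) \<in> single_edges H \<times> double_edges H. DEM k' l' i' j' H = DEM k l i j H}"
    using assms by simp
  have f: "finite {((i', j'), (k', l')) \<in> single_edges H \<times> double_edges H. DEM k' l' i' j' H = DEM k l i j H}"
    using fin by (rule fin_quad)
  have "card {((i', j'), (k', l')) \<in> single_edges H \<times> double_edges H. DEM k' l' i' j' H = DEM k l i j H} > 0"
    using card_pos_mem[OF f m] .
  moreover have "card (single_edges H) > 0" using card_pos_mem[OF fin_single[OF assms(1)] assms(2)] .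
  moreover have "card (double_edges H) > 0" using card_pos_mem[OF fin_double[OF assms(1)] assms(3)] .
  moreover have "single_edges H \<noteq> {}" "double_edges H \<noteq> {}" using assms(2,3) by blast+
  ultimately show ?thesis unfolding T_DEM_def
    by (simp only: if_False de_Morgan_disj not_False_eq_True simp_thms divide_pos_pos of_nat_0_less_iff mult_pos_pos)
qed

end



context gs begin

lemma cs_out: assumes "H \<in> S" "H' \<notin> S" "V1 \<in> max_cliques V E" "V2 \<in> max_cliques V E"
  shows "cs V1 V2 H H' = 0"
proof -
  have e: "{\<pi> \<in> swap_perms V1 V2. CS \<pi> V1 V2 H = H'} = {}"
    using CS_in[OF assms(1,3,4)] assms(2) by auto
  show ?thesis unfolding cs_def e by simp
qed

lemma cs_sum: assumes "H \<in> S" "V1 \<in> max_cliques V E" "V2 \<in> max_cliques V E"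
  shows "(\<Sum>H'\<in>S. cs V1 V2 H H') = card (swap_perms V1 V2)"
  unfolding cs_def
  by (rule sum_card_fibres) (use swap_perms_fin mc_fin assms finite_S CS_in[OF assms(1,2,3)] in auto)

lemma cs_self: assumes "finite C" shows "cs C C H H > 0"
proof -
  have m: "id \<in> {\<pi> \<in> swap_perms C C. CS \<pi> C C H = H}" using id_swap[of C] CS_id[of C C H] by blast
  have f: "finite {\<pi> \<in> swap_perms C C. CS \<pi> C C H = H}" using swap_perms_fin[OF assms assms] by simp
  show ?thesis unfolding cs_def using card_pos_mem[OF f m] .
qed

lemma sw_pos: assumes "V1 \<in> max_cliques V E" "V2 \<in> max_cliques V E" "card V1 = card V2"
  shows "card (swap_perms V1 V2) > 0"
  using swap_perms_ne[OF mc_fin[OF assms(1)] mc_fin[OF assms(2)] assms(3)]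
    swap_perms_fin[OF mc_fin[OF assms(1)] mc_fin[OF assms(2)]] card_gt_0_iff by blast

lemma mcs_mc: "C \<in> max_cliques_of_size V E d \<Longrightarrow> C \<in> max_cliques V E \<and> card C = d"
  unfolding max_cliques_of_size_def by simp
lemma fin_mcs: "finite (max_cliques_of_size V E d)"
  unfolding max_cliques_of_size_def using fin_mc by simp
lemma fin_cls: "finite (clique_sizes V E)"
  unfolding clique_sizes_def using fin_mc by simp
lemma mcs_pos: "d \<in> clique_sizes V E \<Longrightarrow> card (max_cliques_of_size V E d) > 0"
  unfolding clique_sizes_def max_cliques_of_size_def using fin_mc
  by (auto simp: card_gt_0_iff)

lemma T_CP_alt: "T_CP V E p H H' = (\<Sum>d\<in>clique_sizes V E. p d *
        (\<Sum>C\<in>max_cliques_of_size V E d.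
           (1 / real (card (max_cliques_of_size V E d))) *
           (real (cs C C H H') / real (card (swap_perms C C)))))"
proof -
  have "{\<pi>. \<pi> permutes C \<and> CP \<pi> C H = H'} = {\<pi> \<in> swap_perms C C. CS \<pi> C C H = H'}" for C
    by (simp add: swap_perms_same CP_Mv CS_Mv)
  thus ?thesis unfolding T_CP_def cs_def swap_perms_same by simp
qed

lemma T_CS_alt: "T_CS V E p H H' = (\<Sum>d\<in>clique_sizes V E. p d *
        (\<Sum>V1\<in>max_cliques_of_size V E d. \<Sum>V2\<in>max_cliques_of_size V E d.
           (1 / real (card (max_cliques_of_size V E d)) ^ 2) *
           (real (cs V1 V2 H H') / real (card (swap_perms V1 V2)))))"
  unfolding T_CS_def cs_def ..

end

locale gs2 = gs +
  fixes p :: "nat \<Rightarrow> real"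
  assumes p_nn: "\<forall>d\<in>clique_sizes V E. p d \<ge> 0"
    and p_sum: "(\<Sum>d\<in>clique_sizes V E. p d) = 1"
begin

lemma T_CP_nn: "T_CP V E p H H' \<ge> 0"
  unfolding T_CP_def
proof (rule sum_nonneg)
  fix d assume "d \<in> clique_sizes V E"
  hence "p d \<ge> 0" using p_nn by blast
  moreover have "0 \<le> (\<Sum>C\<in>max_cliques_of_size V E d.
           (1 / real (card (max_cliques_of_size V E d))) *
           (real (card {\<pi>. \<pi> permutes C \<and> CP \<pi> C H = H'}) / real (card {\<pi>. \<pi> permutes C})))"
    by (rule sum_nonneg) simp
  ultimately show "0 \<le> p d * (\<Sum>C\<in>max_cliques_of_size V E d.
           (1 / real (card (max_cliques_of_size V E d))) *
           (real (card {\<pi>. \<pi> permutes C \<and> CP \<pi> C H = H'}) / real (card {\<pi>. \<pi> permutes C})))"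
    by (rule mult_nonneg_nonneg)
qed

lemma T_CS_nn: "T_CS V E p H H' \<ge> 0"
  unfolding T_CS_alt
proof (rule sum_nonneg)
  fix d assume "d \<in> clique_sizes V E"
  hence "p d \<ge> 0" using p_nn by blast
  moreover have "0 \<le> (\<Sum>V1\<in>max_cliques_of_size V E d. \<Sum>V2\<in>max_cliques_of_size V E d.
           (1 / real (card (max_cliques_of_size V E d)) ^ 2) *
           (real (cs V1 V2 H H') / real (card (swap_perms V1 V2))))"
    by (intro sum_nonneg) simp
  ultimately show "0 \<le> p d * (\<Sum>V1\<in>max_cliques_of_size V E d. \<Sum>V2\<in>max_cliques_of_size V E d.
           (1 / real (card (max_cliques_of_size V E d)) ^ 2) *
           (real (cs V1 V2 H H') / real (card (swap_perms V1 V2))))"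
    by (rule mult_nonneg_nonneg)
qed

lemma T_CP_out: assumes "H \<in> S" "H' \<notin> S" shows "T_CP V E p H H' = 0"
  unfolding T_CP_alt using cs_out[OF assms] mcs_mc by simp

lemma T_CS_out: assumes "H \<in> S" "H' \<notin> S" shows "T_CS V E p H H' = 0"
proof -
  have z: "V1 \<in> max_cliques_of_size V E d \<Longrightarrow> V2 \<in> max_cliques_of_size V E d \<Longrightarrow> cs V1 V2 H H' = 0" for d V1 V2
    using cs_out[OF assms] mcs_mc by metis
  show ?thesis unfolding T_CS_alt by (simp add: z cong: sum.cong)
qed

lemma T_CP_sym: shows "T_CP V E p H H' = T_CP V E p H' H"
proof -
  have z: "C \<in> max_cliques_of_size V E d \<Longrightarrow> cs C C H H' = cs C C H' H" for d C
    using cs_sym mcs_mc mc_fin by metis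
  show ?thesis unfolding T_CP_alt by (simp add: z cong: sum.cong)
qed

lemma T_CS_sym: shows "T_CS V E p H H' = T_CS V E p H' H"
proof -
  have z: "V1 \<in> max_cliques_of_size V E d \<Longrightarrow> V2 \<in> max_cliques_of_size V E d \<Longrightarrow> cs V1 V2 H H' = cs V1 V2 H' H" for d V1 V2
    using cs_sym mcs_mc mc_fin by metis
  show ?thesis unfolding T_CS_alt by (simp add: z cong: sum.cong)
qed

end



context gs2 begin

lemma inner_cs: assumes "H \<in> S" "V1 \<in> max_cliques_of_size V E d" "V2 \<in> max_cliques_of_size V E d"
  shows "(\<Sum>H'\<in>S. real (cs V1 V2 H H') / real (card (swap_perms V1 V2))) = 1"
proof -
  have m: "V1 \<in> max_cliques V E" "V2 \<in> max_cliques V E" "card V1 = card V2" using assms(2,3) mcs_mc by auto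
  have "(\<Sum>H'\<in>S. real (cs V1 V2 H H') / real (card (swap_perms V1 V2)))
      = real (\<Sum>H'\<in>S. cs V1 V2 H H') / real (card (swap_perms V1 V2))"
    by (simp add: sum_divide_distrib)
  also have "\<dots> = 1" using cs_sum[OF assms(1) m(1,2)] sw_pos[OF m] by simp
  finally show ?thesis .
qed

lemma mcs_nz: "d \<in> clique_sizes V E \<Longrightarrow> card (max_cliques_of_size V E d) \<noteq> 0"
  using mcs_pos by auto

lemma T_CP_sum: assumes "H \<in> S" shows "(\<Sum>H'\<in>S. T_CP V E p H H') = 1"
proof -
  let ?a = "\<lambda>d. 1 / real (card (max_cliques_of_size V E d))"
  let ?f = "\<lambda>C H'. real (cs C C H H') / real (card (swap_perms C C))"
  have "(\<Sum>H'\<in>S. T_CP V E p H H') = (\<Sum>d\<in>clique_sizes V E. p d * (\<Sum>H'\<in>S. \<Sum>C\<in>max_cliques_of_size V E d. ?a d * ?f C H'))"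
    unfolding T_CP_alt by (rule sw1)
  also have "\<dots> = (\<Sum>d\<in>clique_sizes V E. p d * (\<Sum>C\<in>max_cliques_of_size V E d. ?a d * (\<Sum>H'\<in>S. ?f C H')))"
    by (simp only: sw1)
  also have "\<dots> = (\<Sum>d\<in>clique_sizes V E. p d * (\<Sum>C\<in>max_cliques_of_size V E d. ?a d))"
    using inner_cs[OF assms] by (simp cong: sum.cong)
  also have "\<dots> = (\<Sum>d\<in>clique_sizes V E. p d)"
    by (simp add: mcs_nz cong: sum.cong)
  finally show ?thesis using p_sum by simp
qed

lemma T_CS_sum: assumes "H \<in> S" shows "(\<Sum>H'\<in>S. T_CS V E p H H') = 1"
proof -
  let ?a = "\<lambda>d. 1 / real (card (max_cliques_of_size V E d)) ^ 2"
  let ?f = "\<lambda>V1 V2 H'. real (cs V1 V2 H H') / real (card (swap_perms V1 V2))"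
  have "(\<Sum>H'\<in>S. T_CS V E p H H') = (\<Sum>d\<in>clique_sizes V E. p d * (\<Sum>H'\<in>S. \<Sum>V1\<in>max_cliques_of_size V E d. \<Sum>V2\<in>max_cliques_of_size V E d. ?a d * ?f V1 V2 H'))"
    unfolding T_CS_alt by (rule sw1)
  also have "\<dots> = (\<Sum>d\<in>clique_sizes V E. p d * (\<Sum>V1\<in>max_cliques_of_size V E d. \<Sum>H'\<in>S. \<Sum>V2\<in>max_cliques_of_size V E d. ?a d * ?f V1 V2 H'))"
    by (rule sum.cong[OF refl], rule arg_cong[where f="\<lambda>x. p _ * x"], rule sum.swap)
  also have "\<dots> = (\<Sum>d\<in>clique_sizes V E. p d * (\<Sum>V1\<in>max_cliques_of_size V E d. \<Sum>V2\<in>max_cliques_of_size V E d. ?a d * (\<Sum>H'\<in>S. ?f V1 V2 H')))"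
    by (simp only: sw1)
  also have "\<dots> = (\<Sum>d\<in>clique_sizes V E. p d * (\<Sum>V1\<in>max_cliques_of_size V E d. \<Sum>V2\<in>max_cliques_of_size V E d. ?a d))"
    using inner_cs[OF assms] by (simp cong: sum.cong)
  also have "\<dots> = (\<Sum>d\<in>clique_sizes V E. p d)"
    by (simp add: mcs_nz power2_eq_square cong: sum.cong)
  finally show ?thesis using p_sum by simp
qed

lemma T_CP_self: assumes "H \<in> S" shows "T_CP V E p H H > 0"
proof -
  obtain d where d: "d \<in> clique_sizes V E" "p d > 0"
  proof -
    have "\<not> (\<forall>d\<in>clique_sizes V E. p d \<le> 0)"
    proof
      assume "\<forall>d\<in>clique_sizes V E. p d \<le> 0"
      hence "(\<Sum>d\<in>clique_sizes V E. p d) \<le> 0" using sum_nonpos by metis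
      thus False using p_sum by simp
    qed
    thus ?thesis using that by force
  qed
  have "max_cliques_of_size V E d \<noteq> {}" using mcs_pos[OF d(1)] by auto
  then obtain C where C: "C \<in> max_cliques_of_size V E d" by blast
  have fC: "finite C" using mcs_mc[OF C] mc_fin by blast
  have cpos: "card (max_cliques_of_size V E d) > 0" using mcs_pos[OF d(1)] .
  have spos: "card (swap_perms C C) > 0" using sw_pos mcs_mc[OF C] by blast
  have t: "0 < 1 / real (card (max_cliques_of_size V E d)) * (real (cs C C H H) / real (card (swap_perms C C)))"
    using cs_self[OF fC] cpos spos by simp
  have "0 < (\<Sum>C\<in>max_cliques_of_size V E d. 1 / real (card (max_cliques_of_size V E d)) * (real (cs C C H H) / real (card (swap_perms C C))))"
    by (rule sum_pos2[OF fin_mcs C, where f="\<lambda>C. 1 / real (card (max_cliques_of_size V E d)) * (real (cs C C H H) / real (card (swap_perms C C)))", OF t]) simp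
  hence t2: "0 < p d * (\<Sum>C\<in>max_cliques_of_size V E d. 1 / real (card (max_cliques_of_size V E d)) * (real (cs C C H H) / real (card (swap_perms C C))))"
    using d(2) by simp
  show ?thesis unfolding T_CP_alt
    by (rule sum_pos2[OF fin_cls d(1), where f="\<lambda>d. p d * (\<Sum>C\<in>max_cliques_of_size V E d. 1 / real (card (max_cliques_of_size V E d)) * (real (cs C C H H) / real (card (swap_perms C C))))", OF t2]) (use p_nn in \<open>auto intro!: mult_nonneg_nonneg sum_nonneg\<close>)
qed

end



locale gs3 = gs2 +
  fixes pSEF pDEM pCP pCS :: real
  assumes pos: "pSEF > 0" "pDEM > 0" "pCP > 0" "pCS > 0"
    and psum: "pSEF + pDEM + pCP + pCS = 1"
begin

abbreviation T where "T \<equiv> T_u V E p pSEF pDEM pCP pCS"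

lemma T_nn: "T H H' \<ge> 0"
  unfolding T_u_def using pos T_SEF_nn T_DEM_nn T_CP_nn T_CS_nn
  by (intro add_nonneg_nonneg mult_nonneg_nonneg) (auto simp: less_imp_le)

lemma T_out: "H \<in> S \<Longrightarrow> H' \<notin> S \<Longrightarrow> T H H' = 0"
  unfolding T_u_def using T_SEF_out T_DEM_out T_CP_out T_CS_out by simp

lemma T_sum: assumes "H \<in> S" shows "(\<Sum>H'\<in>S. T H H') = 1"
proof -
  have "(\<Sum>H'\<in>S. T H H') = pSEF * (\<Sum>H'\<in>S. T_SEF H H') + pDEM * (\<Sum>H'\<in>S. T_DEM H H')
     + pCP * (\<Sum>H'\<in>S. T_CP V E p H H') + pCS * (\<Sum>H'\<in>S. T_CS V E p H H')"
    unfolding T_u_def by (simp add: sum.distrib sum_distrib_left)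
  thus ?thesis using T_SEF_sum[OF assms] T_DEM_sum[OF assms] T_CP_sum[OF assms] T_CS_sum[OF assms] psum
    by simp
qed

lemma T_sym: "H \<in> S \<Longrightarrow> H' \<in> S \<Longrightarrow> T H H' = T H' H"
  unfolding T_u_def using T_SEF_sym T_DEM_sym T_CP_sym T_CS_sym by simp

lemma T_self: assumes "H \<in> S" shows "T H H > 0"
proof -
  have "pCP * T_CP V E p H H > 0" using pos T_CP_self[OF assms] by simp
  moreover have "pSEF * T_SEF H H \<ge> 0" "pDEM * T_DEM H H \<ge> 0" "pCS * T_CS V E p H H \<ge> 0"
    using pos T_SEF_nn T_DEM_nn T_CS_nn by (auto intro!: mult_nonneg_nonneg simp: less_imp_le)
  ultimately show ?thesis unfolding T_u_def by linarith
qed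

lemma T_SEF_step: assumes "H \<in> S" "(i,j) \<in> single_edges H" shows "T H (SEF i j H) > 0"
proof -
  have "pSEF * T_SEF H (SEF i j H) > 0" using pos T_SEF_pos[OF assms] by simp
  moreover have "pDEM * T_DEM H (SEF i j H) \<ge> 0" "pCP * T_CP V E p H (SEF i j H) \<ge> 0" "pCS * T_CS V E p H (SEF i j H) \<ge> 0"
    using pos T_DEM_nn T_CP_nn T_CS_nn by (auto intro!: mult_nonneg_nonneg simp: less_imp_le)
  ultimately show ?thesis unfolding T_u_def by linarith
qed

lemma T_DEM_step: assumes "H \<in> S" "(i,j) \<in> single_edges H" "(k,l) \<in> double_edges H"
  shows "T H (DEM k l i j H) > 0"
proof -
  have "pDEM * T_DEM H (DEM k l i j H) > 0" using pos T_DEM_pos[OF assms] by simp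
  moreover have "pSEF * T_SEF H (DEM k l i j H) \<ge> 0" "pCP * T_CP V E p H (DEM k l i j H) \<ge> 0" "pCS * T_CS V E p H (DEM k l i j H) \<ge> 0"
    using pos T_SEF_nn T_CP_nn T_CS_nn by (auto intro!: mult_nonneg_nonneg simp: less_imp_le)
  ultimately show ?thesis unfolding T_u_def by linarith
qed

lemma mp_nn: "mat_pow S T n x y \<ge> 0"
  by (induction n arbitrary: y) (auto intro!: sum_nonneg mult_nonneg_nonneg T_nn)

lemma mp_step: assumes "mat_pow S T n x z > 0" "z \<in> S" "T z y > 0"
  shows "mat_pow S T (Suc n) x y > 0"
proof -
  have "0 < mat_pow S T n x z * T z y" using assms by simp
  hence "0 < (\<Sum>w\<in>S. mat_pow S T n x w * T w y)"
    by (rule sum_pos2[OF finite_S assms(2), where f="\<lambda>w. mat_pow S T n x w * T w y"])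
      (simp add: mp_nn T_nn)
  thus ?thesis by simp
qed

lemma step_exists:
  assumes x: "x \<in> S" and y: "y \<in> S" and ne: "x \<noteq> y"
  shows "\<exists>z\<in>S. T z y > 0 \<and> card (z - x) < card (y - x)"
proof -
  have fx: "finite x" "finite y" using S_fin x y by auto
  have "\<not> x \<subseteq> y"
  proof
    assume "x \<subseteq> y"
    hence "x = y" using card_subset_eq[OF fx(2)] S_card x y by metis
    thus False using ne by simp
  qed
  then obtain a b where ab: "(a,b) \<in> x" "(a,b) \<notin> y" by auto
  have "(a,b) \<in> y \<union> converse y" using S_symcl[OF x] S_symcl[OF y] ab(1) by blast
  hence ba: "(b,a) \<in> y" using ab(2) by auto
  have fyx: "finite (y - x)" using fx by simp
  show ?thesis
  proof (cases "(b,a) \<in> x")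
    case False
    have s: "(b,a) \<in> single_edges y" using ba ab unfolding single_edges_def by simp
    define z where "z = SEF b a y"
    have zS: "z \<in> S" unfolding z_def using SEF_in[OF y s] .
    have "T y z > 0" unfolding z_def using T_SEF_step[OF y s] .
    hence Tz: "T z y > 0" using T_sym[OF y zS] by simp
    have "z - x = (y - x) - {(b,a)}" unfolding z_def SEF_def using ab by auto
    moreover have "(b,a) \<in> y - x" using ba False by simp
    ultimately have "card (z - x) < card (y - x)" using fyx card_Diff1_less by metis
    thus ?thesis using zS Tz by blast
  next
    case True
    have s: "(b,a) \<in> single_edges y" using ba ab unfolding single_edges_def by simp
    have dx: "(a,b) \<in> double_edges x" using ab True unfolding double_edges_def by simp
    have dy: "(a,b) \<notin> double_edges y" using ab unfolding double_edges_def by simp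
    have "\<not> double_edges y \<subseteq> double_edges x"
    proof
      assume "double_edges y \<subseteq> double_edges x"
      hence "double_edges y = double_edges x"
        using card_subset_eq[OF fin_double[OF x]] card_double_S x y by metis
      thus False using dx dy by simp
    qed
    then obtain k l where kl: "(k,l) \<in> double_edges y" "(k,l) \<notin> double_edges x" by auto
    obtain k' l' where kl': "(k',l') \<in> double_edges y" "(k',l') \<notin> x"
    proof (cases "(k,l) \<in> x")
      case True
      hence "(l,k) \<notin> x" using kl unfolding double_edges_def by simp
      moreover have "(l,k) \<in> double_edges y" using kl unfolding double_edges_def by simp
      ultimately show ?thesis using that by blast
    next
      case False thus ?thesis using that kl by blast
    qed
    define z where "z = DEM k' l' b a y"
    have zS: "z \<in> S" unfolding z_def using DEM_in[OF y s kl'(1)] .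
    have "T y z > 0" unfolding z_def using T_DEM_step[OF y s kl'(1)] .
    hence Tz: "T z y > 0" using T_sym[OF y zS] by simp
    have "z - x = (y - x) - {(k',l')}" unfolding z_def DEM_def using ab by auto
    moreover have "(k',l') \<in> y - x" using kl' unfolding double_edges_def by simp
    ultimately have "card (z - x) < card (y - x)" using fyx card_Diff1_less by metis
    thus ?thesis using zS Tz by blast
  qed
qed

lemma reach: assumes "x \<in> S" shows "\<forall>y\<in>S. card (y - x) = m \<longrightarrow> (\<exists>n. mat_pow S T n x y > 0)"
proof (induction m rule: less_induct)
  case (less m)
  show ?case
  proof (intro ballI impI)
    fix y assume y: "y \<in> S" and m: "card (y - x) = m"
    show "\<exists>n. mat_pow S T n x y > 0"
    proof (cases "x = y")
      case True
      hence "mat_pow S T 0 x y > 0" by simp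
      thus ?thesis by blast
    next
      case False
      then obtain z where z: "z \<in> S" "T z y > 0" "card (z - x) < card (y - x)"
        using step_exists[OF assms y] by blast
      then obtain n where "mat_pow S T n x z > 0" using less m by blast
      hence "mat_pow S T (Suc n) x y > 0" using mp_step z by blast
      thus ?thesis by blast
    qed
  qed
qed

lemma irred: "irreducible_chain S T"
  unfolding irreducible_chain_def using reach by blast

lemma aper: "aperiodic_chain S T"
  unfolding aperiodic_chain_def
proof
  fix x assume x: "x \<in> S"
  have "mat_pow S T 1 x x = (\<Sum>z\<in>S. (if x = z then 1 else 0) * T z x)" by simp
  also have "\<dots> = (\<Sum>z\<in>S. if z = x then T x x else 0)" by (rule sum.cong) auto
  also have "\<dots> = T x x" using x finite_S by simp
  finally have "1 \<in> {n. n \<ge> 1 \<and> mat_pow S T n x x > 0}" using T_self[OF x] by simp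
  hence "Gcd {n. n \<ge> 1 \<and> mat_pow S T n x x > 0} dvd 1" by (rule Gcd_dvd)
  thus "Gcd {n. n \<ge> 1 \<and> mat_pow S T n x x > 0} = 1" by simp
qed

lemma stoch: "stochastic_on S T"
  unfolding stochastic_on_def using finite_S T_nn T_out T_sum by force

lemma stat: "stationary_distribution S T (\<lambda>H. 1 / real (card S))"
  unfolding stationary_distribution_def
proof (intro conjI ballI)
  have cpos: "card S > 0" using finite_S E_in card_gt_0_iff by blast
  show "(\<Sum>x\<in>S. 1 / real (card S)) = 1" using cpos by simp
  show "0 \<le> 1 / real (card S)" for x by simp
  fix y assume y: "y \<in> S"
  have "(\<Sum>x\<in>S. 1 / real (card S) * T x y) = 1 / real (card S) * (\<Sum>x\<in>S. T y x)"
    unfolding sum_distrib_left[symmetric] using T_sym y by (intro arg_cong[where f="\<lambda>t. _ * t"] sum.cong) auto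
  thus "(\<Sum>x\<in>S. 1 / real (card S) * T x y) = 1 / real (card S)" using T_sum[OF y] by simp
qed

end


theorem corollary3p11:
  fixes V :: "'a set" and E :: "('a \<times> 'a) set" and p :: "nat \<Rightarrow> real"
    and pSEF pDEM pCP pCS :: real
  assumes "simple_digraph V E"
    and "double_edges E \<noteq> {}"
    and "\<forall>d\<in>clique_sizes V E. p d \<ge> 0"
    and "(\<Sum>d\<in>clique_sizes V E. p d) = 1"
    and "pSEF > 0" "pDEM > 0" "pCP > 0" "pCS > 0"
    and "pSEF + pDEM + pCP + pCS = 1"
  shows "E \<in> G0inf V E
    \<and> stochastic_on (G0inf V E) (T_u V E p pSEF pDEM pCP pCS)
    \<and> ergodic_chain (G0inf V E) (T_u V E p pSEF pDEM pCP pCS)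
    \<and> stationary_distribution (G0inf V E) (T_u V E p pSEF pDEM pCP pCS)
        (\<lambda>H. 1 / real (card (G0inf V E)))"
proof -
  interpret gs3 V E p pSEF pDEM pCP pCS
    by unfold_locales (use assms in auto)
  show ?thesis using E_in stoch irred aper stat unfolding ergodic_chain_def by blast
qed

end
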